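(* In the setting below, under the persistent excitation assumption and the inexact disturbance bound assumption, the minimal parameter set $\Theta_t=\Theta_0\cap\bigcap_{j=1}^t\Delta_j$ converges with probability 1 to a set $\Theta_\infty=\bigcap_{t\ge0}\Theta_t$ satisfying $\Theta_\infty\subseteq\{\theta\in\mathbb{R}^p:\|\theta-\theta^\ast\|\le\rho\sqrt{N_u/\beta}\}$.
   Context: Setting: $\theta^\ast\in\mathbb{R}^p$ is a fixed (unknown) parameter vector. $\Theta_0\subset\mathbb{R}^p$ is a compact convex polytope containing $\theta^\ast$. $\mathcal{W}=\{w\in\mathbb{R}^{n_x}:\Pi_w w\le\pi_w\}$ is a compact convex polytope with $\pi_w>0$. The disturbances $w_0,w_1,\dots$ are independent random vectors in $\mathbb{R}^{n_x}$. $D_0,D_1,\dots\in\mathbb{R}^{n_x\times p}$ is a given (non-random) sequence of regressor matrices. For $t\ge1$ the (random) unfalsified parameter set is $\Delta_t=\{\theta\in\mathbb{R}^p: D_{t-1}(\theta^\ast-\theta)+w_{t-1}\in\mathcal{W}\}$. $\|\cdot\|$ is the Euclidean norm (induced 2-norm for matrices); $\mathcal{B}=\{x\in\mathbb{R}^{n_x}:\|x\|\le1\}$; $\oplus$ is Minkowski sum. Persistent excitation assumption: there exist $\tau>0$, $\beta>0$ and an integer $N_u\ge\lceil p/n_x\rceil$ such that for every $t\ge0$, $\|D_t\|\le\tau$ and $\sum_{j=t}^{t+N_u-1}D_j^\top D_j\succeq\beta I$. Inexact disturbance bound assumption: there exist a compact set $\Omega\subset\mathbb{R}^{n_x}$ and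 $\rho>0$ with $\Omega\subseteq\mathcal{W}\subseteq\Omega\oplus\rho\mathcal{B}$, such that $w_t\in\Omega$ for all $t$, and a function $p_w:(0,\infty)\to(0,1]$ such that for all $w^0\in\partial\Omega$ (boundary of $\Omega$), all $\epsilon>0$ and all $t\ge0$, $\Pr\{\|w_t-w^0\|<\epsilon\}\ge p_w(\epsilon)$. *)

theory Defs
  imports "HOL-Analysis.Analysis" "HOL-Probability.Probability"
begin

definition unfalsified_set ::
  "(nat \<Rightarrow> real^'p^'n) \<Rightarrow> (real^'n) set \<Rightarrow> real^'p \<Rightarrow> (nat \<Rightarrow> 'w \<Rightarrow> real^'n)
     \<Rightarrow> nat \<Rightarrow> 'w \<Rightarrow> (real^'p) set" where
  "unfalsified_set D W thetas w t \<omega> =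
     {\<theta>. D (t - 1) *v (thetas - \<theta>) + w (t - 1) \<omega> \<in> W}"

definition min_param_set ::
  "(real^'p) set \<Rightarrow> (nat \<Rightarrow> real^'p^'n) \<Rightarrow> (real^'n) set \<Rightarrow> real^'p
     \<Rightarrow> (nat \<Rightarrow> 'w \<Rightarrow> real^'n) \<Rightarrow> nat \<Rightarrow> 'w \<Rightarrow> (real^'p) set" where
  "min_param_set Theta0 D W thetas w t \<omega> =
     Theta0 \<inter> (\<Inter>j\<in>{1..t}. unfalsified_set D W thetas w j \<omega>)"

definition limit_param_set ::
  "(real^'p) set \<Rightarrow> (nat \<Rightarrow> real^'p^'n) \<Rightarrow> (real^'n) set \<Rightarrow> real^'p
     \<Rightarrow> (nat \<Rightarrow> 'w \<Rightarrow> real^'n) \<Rightarrow> 'w \<Rightarrow> (real^'p) set" where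
  "limit_param_set Theta0 D W thetas w \<omega> =
     (\<Inter>t. min_param_set Theta0 D W thetas w t \<omega>)"

definition hausdorff_dist :: "'a::metric_space set \<Rightarrow> 'a set \<Rightarrow> real" where
  "hausdorff_dist A B = max (SUP a\<in>A. infdist a B) (SUP b\<in>B. infdist b A)"

end

theory Submission
  imports Defs
begin

lemma block_lt: "m < K \<Longrightarrow> i < (N::nat) \<Longrightarrow> m*N+i < K*N"
proof -
  assume a: "m < K" "i < N"
  have "m*N + i < m*N + N" using a by simp
  also have "\<dots> = Suc m * N" by simp
  also have "\<dots> \<le> K*N" using a by (intro mult_right_mono) auto
  finally show ?thesis .
qed

lemma ball_shift: "(\<forall>i\<in>{..<N}. P (a+i)) \<longleftrightarrow> (\<forall>j\<in>{a..<a+(N::nat)}. P j)"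
proof
  assume h: "\<forall>i\<in>{..<N}. P (a+i)"
  show "\<forall>j\<in>{a..<a+N}. P j"
  proof
    fix j assume "j \<in> {a..<a+N}"
    then have "j - a < N" "a + (j - a) = j" by auto
    then show "P j" using h[rule_format, of "j-a"] by simp
  qed
qed auto

lemma (in prob_space) blocks_AE:
  fixes X :: "nat \<Rightarrow> 'a \<Rightarrow> 'b::topological_space" and Bs :: "nat \<Rightarrow> 'b set"
  assumes ind: "indep_vars (\<lambda>_. borel) X UNIV"
    and Bs: "\<And>j. Bs j \<in> sets borel"
    and q: "\<And>j. prob (X j -` Bs j \<inter> space M) \<ge> q" and qpos: "q > 0"
    and N: "N > 0"
  shows "AE \<omega> in M. \<exists>m. \<forall>i<N. X (m*N+i) \<omega> \<in> Bs (m*N+i)"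
proof -
  have rv: "\<And>j. X j \<in> borel_measurable M" using ind by (auto simp: indep_vars_def)
  have Xset: "{\<omega>\<in>space M. X j \<omega> \<in> Bs j} \<in> events" for j
    using measurable_sets[OF rv Bs] by (simp add: vimage_def Int_def conj_commute)
  define Ev where "Ev m = {\<omega>\<in>space M. \<forall>i\<in>{..<N}. X (m*N+i) \<omega> \<in> Bs (m*N+i)}" for m
  define E where "E K = {\<omega>\<in>space M. \<forall>m\<in>{..<K}. \<omega> \<notin> Ev m}" for K
  have Ev_ev: "Ev m \<in> events" for m
    unfolding Ev_def using Xset by (intro sets.sets_Collect_finite_All) auto
  have E_ev: "E K \<in> events" for K
    unfolding E_def using Ev_ev by (intro sets.sets_Collect_finite_All) auto
  have qle1: "q \<le> 1" using q[of 0] prob_le_1 by (meson order_trans)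
  define c where "c = 1 - q^N"
  have c0: "0 \<le> c" unfolding c_def using qle1 qpos by (simp add: power_le_one)
  have c1: "c < 1" unfolding c_def using qpos by simp
  have pEv: "prob (Ev K) \<ge> q^N" for K
  proof -
    have "Ev K = (\<Inter>j\<in>{K*N..<K*N+N}. X j -` Bs j \<inter> space M)"
    proof -
      have sh: "\<And>\<omega>. (\<forall>i\<in>{..<N}. X (K*N+i) \<omega> \<in> Bs (K*N+i)) \<longleftrightarrow> (\<forall>j\<in>{K*N..<K*N+N}. X j \<omega> \<in> Bs j)"
        by (rule ball_shift)
      show ?thesis unfolding Ev_def sh using N by auto
    qed
    then have "prob (Ev K) = (\<Prod>j\<in>{K*N..<K*N+N}. prob (X j -` Bs j \<inter> space M))"
      using indep_varsD[OF ind, of "{K*N..<K*N+N}" Bs] N Bs by simp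
    also have "\<dots> \<ge> (\<Prod>j\<in>{K*N..<K*N+N}. q)"
      using q qpos by (intro prod_mono) (auto intro: less_imp_le)
    finally show ?thesis by simp
  qed
  have indep: "prob (E K \<inter> Ev K) = prob (E K) * prob (Ev K)" for K
  proof -
    let ?A = "{..<K*N}" and ?B = "{K*N..<K*N+N}"
    let ?PA = "PiM ?A (\<lambda>_. borel :: 'b measure)" and ?PB = "PiM ?B (\<lambda>_. borel :: 'b measure)"
    let ?YA = "\<lambda>\<omega>. restrict (\<lambda>i. X i \<omega>) ?A" and ?YB = "\<lambda>\<omega>. restrict (\<lambda>i. X i \<omega>) ?B"
    have iv: "indep_var ?PA ?YA ?PB ?YB"
      by (rule indep_var_restrict[OF ind]) auto
    then have isd: "indep_set (sigma_sets (space M) {?YA -` A \<inter> space M | A. A \<in> sets ?PA})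
        (sigma_sets (space M) {?YB -` A \<inter> space M | A. A \<in> sets ?PB})"
      unfolding indep_var_eq by simp
    define SA where "SA = {f\<in>space ?PA. \<forall>m\<in>{..<K}. \<not> (\<forall>i\<in>{..<N}. f (m*N+i) \<in> Bs (m*N+i))}"
    define SB where "SB = {f\<in>space ?PB. \<forall>i\<in>{..<N}. f (K*N+i) \<in> Bs (K*N+i)}"
    have compA: "{f\<in>space ?PA. f j \<in> Bs j} \<in> sets ?PA" if "j \<in> ?A" for j
      using measurable_sets[OF measurable_component_singleton[OF that] Bs[of j]]
      by (simp add: vimage_def Int_def conj_commute)
    have compB: "{f\<in>space ?PB. f j \<in> Bs j} \<in> sets ?PB" if "j \<in> ?B" for j
      using measurable_sets[OF measurable_component_singleton[OF that] Bs[of j]]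
      by (simp add: vimage_def Int_def conj_commute)
    have SA: "SA \<in> sets ?PA" unfolding SA_def
      by (intro sets.sets_Collect_finite_All sets.sets_Collect_neg compA) (auto intro: block_lt)
    have SB: "SB \<in> sets ?PB" unfolding SB_def
      by (intro sets.sets_Collect_finite_All compB) auto
    have YA: "?YA \<omega> \<in> space ?PA" for \<omega> by (auto simp: space_PiM)
    have YB: "?YB \<omega> \<in> space ?PB" for \<omega> by (auto simp: space_PiM)
    have eA: "E K = ?YA -` SA \<inter> space M"
      using YA by (auto simp: E_def Ev_def SA_def block_lt)
    have eB: "Ev K = ?YB -` SB \<inter> space M"
      using YB by (auto simp: Ev_def SB_def)
    show ?thesis unfolding eA eB
      by (rule indep_setD[OF isd]) (auto intro!: sigma_sets.Basic SA SB)
  qed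
  have rec: "E (Suc K) = E K - Ev K" for K
    by (auto simp: E_def lessThan_Suc)
  have bound: "prob (E K) \<le> c^K" for K
  proof (induction K)
    case 0
    have "E 0 = space M" by (simp add: E_def)
    then show ?case by (simp add: prob_space)
  next
    case (Suc K)
    have "prob (E (Suc K)) = prob (E K) - prob (E K \<inter> Ev K)"
      unfolding rec by (rule finite_measure_Diff'[OF E_ev Ev_ev])
    also have "\<dots> = prob (E K) * (1 - prob (Ev K))" by (simp add: indep algebra_simps)
    also have "\<dots> \<le> c^K * c"
      using Suc pEv[of K] c0 unfolding c_def by (intro mult_mono) auto
    finally show ?case by (simp add: mult.commute)
  qed
  define Bad where "Bad = {\<omega>\<in>space M. \<forall>m. \<omega> \<notin> Ev m}"
  have Bad_ev: "Bad \<in> events" unfolding Bad_def using Ev_ev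
    by (intro sets.sets_Collect_countable_All) auto
  have "prob Bad \<le> c^K" for K
  proof -
    have "Bad \<subseteq> E K" by (auto simp: Bad_def E_def)
    then have "prob Bad \<le> prob (E K)" using E_ev by (intro finite_measure_mono)
    then show ?thesis using bound[of K] by simp
  qed
  then have "prob Bad \<le> 0"
    by (intro LIMSEQ_le_const[OF LIMSEQ_realpow_zero[OF c0 c1]]) auto
  then have "prob Bad = 0" using measure_nonneg[of M Bad] by simp
  then have "Bad \<in> null_sets M" using Bad_ev by (simp add: emeasure_eq_measure null_sets_def)
  then show ?thesis
    by (rule AE_I') (auto simp: Bad_def Ev_def)
qed

lemma supp_exists:
  fixes Omega :: "(real^'n) set"
  assumes "compact Omega" "Omega \<noteq> {}"
  shows "\<exists>s. s \<in> frontier Omega \<and> (\<forall>a\<in>Omega. v \<bullet> a \<le> v \<bullet> s)"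
proof (cases "v = 0")
  case True
  have "Omega \<noteq> UNIV" using assms(1) compact_imp_bounded not_bounded_UNIV by blast
  then obtain s where "s \<in> frontier Omega" using frontier_not_empty[OF assms(2)] by blast
  then show ?thesis using True by auto
next
  case False
  have "continuous_on Omega (\<lambda>a. v \<bullet> a)" by (intro continuous_intros)
  then obtain s where s: "s \<in> Omega" "\<forall>a\<in>Omega. v \<bullet> a \<le> v \<bullet> s"
    using continuous_attains_sup[OF assms, of "\<lambda>a. v \<bullet> a"] by auto
  have "s \<notin> interior Omega"
  proof
    assume "s \<in> interior Omega"
    then obtain e where e: "e > 0" "ball s e \<subseteq> Omega" by (meson mem_interior)
    define y where "y = s + (e / 2 / norm v) *\<^sub>R v"
    have "dist s y = e / 2" using False e by (simp add: y_def dist_norm)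
    then have "y \<in> Omega" using e by auto
    moreover have "v \<bullet> y = v \<bullet> s + e / 2 * norm v"
      using False by (simp add: y_def inner_add_right power2_norm_eq_inner[symmetric] power2_eq_square)
    ultimately show False using s e False by (metis add_le_same_cancel1 half_gt_zero_iff linorder_not_le mult_pos_pos zero_less_norm_iff)
  qed
  then have "s \<in> frontier Omega"
    using s compact_imp_closed[OF assms(1)] by (simp add: frontier_def closure_closed)
  then show ?thesis using s by blast
qed

lemma supp_ineq:
  fixes v s a :: "real^'n"
  assumes "\<forall>a\<in>Omega. v \<bullet> a \<le> v \<bullet> s" "a \<in> Omega"
  shows "norm v \<le> norm (s + v - a)"
proof (cases "v = 0")
  case False
  have "norm v ^ 2 \<le> v \<bullet> (s + v - a)"
    using assms by (simp add: inner_diff_right inner_add_right power2_norm_eq_inner)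
  also have "\<dots> \<le> norm v * norm (s + v - a)" by (rule norm_cauchy_schwarz)
  finally have "norm v * norm v \<le> norm v * norm (s + v - a)" by (simp add: power2_eq_square)
  then show ?thesis using False by simp
qed simp

lemma sum_mv: "finite S \<Longrightarrow> (\<Sum>j\<in>S. (A j :: real^'n^'m)) *v x = (\<Sum>j\<in>S. A j *v x)"
  by (induction S rule: finite_induct) (auto simp: matrix_vector_mult_add_rdistrib)

lemma quad_form:
  fixes D :: "nat \<Rightarrow> real^'p^'n"
  assumes "finite S"
  shows "x \<bullet> ((\<Sum>j\<in>S. transpose (D j) ** D j) *v x) = (\<Sum>j\<in>S. norm (D j *v x) ^ 2)"
proof -
  have "x \<bullet> ((transpose (D j) ** D j) *v x) = norm (D j *v x) ^ 2" for j
  proof -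
    have "x \<bullet> ((transpose (D j) ** D j) *v x) = x \<bullet> ((D j *v x) v* D j)"
      by (simp add: matrix_vector_mul_assoc[symmetric])
    also have "\<dots> = (D j *v x) \<bullet> (D j *v x)"
      by (metis inner_commute dot_lmul_matrix)
    finally show ?thesis by (simp add: power2_norm_eq_inner)
  qed
  then show ?thesis using assms by (simp add: sum_mv inner_sum_right)
qed

theorem corollary4:
  fixes M :: "'w measure"
    and thetas :: "real^'p"
    and Theta0 :: "(real^'p) set"
    and Pi_w :: "real^'n^'m" and pi_w :: "real^'m"
    and W :: "(real^'n) set"
    and w :: "nat \<Rightarrow> 'w \<Rightarrow> real^'n"
    and D :: "nat \<Rightarrow> real^'p^'n"
    and tau beta rho :: real and N_u :: nat
    and Omega :: "(real^'n) set"
    and p_w :: "real \<Rightarrow> real"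
  assumes prob: "prob_space M"
    and Theta0_poly: "polytope Theta0" and Theta0_compact: "compact Theta0"
    and Theta0_convex: "convex Theta0" and thetas_in: "thetas \<in> Theta0"
    and W_def: "W = {x. \<forall>i. (Pi_w *v x) $ i \<le> pi_w $ i}"
    and W_compact: "compact W" and W_convex: "convex W"
    and pi_pos: "\<forall>i. pi_w $ i > 0"
    and indep: "prob_space.indep_vars M (\<lambda>_. borel) w UNIV"
    (* persistent excitation *)
    and tau_pos: "tau > 0" and beta_pos: "beta > 0"
    and N_u_ge: "real N_u \<ge> of_int \<lceil>real CARD('p) / real CARD('n)\<rceil>"
    and D_bound: "\<forall>t. onorm (\<lambda>x. D t *v x) \<le> tau"
    and PE: "\<forall>t. \<forall>x. x \<bullet> ((\<Sum>j\<in>{t..t + N_u - 1}. transpose (D j) ** D j) *v x)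
                        \<ge> beta * (x \<bullet> x)"
    (* inexact disturbance bound *)
    and Omega_compact: "compact Omega" and rho_pos: "rho > 0"
    and Omega_sub: "Omega \<subseteq> W"
    and W_sub: "W \<subseteq> {a + b | a b. a \<in> Omega \<and> b \<in> cball 0 rho}"
    and w_in: "\<forall>t. \<forall>\<omega>\<in>space M. w t \<omega> \<in> Omega"
    and p_w_range: "\<forall>e>0. 0 < p_w e \<and> p_w e \<le> 1"
    and p_w_bound: "\<forall>w0\<in>frontier Omega. \<forall>e>0. \<forall>t.
                      measure M {\<omega>\<in>space M. norm (w t \<omega> - w0) < e} \<ge> p_w e"
  shows "AE \<omega> in M.
           (\<lambda>t. hausdorff_dist (min_param_set Theta0 D W thetas w t \<omega>)
                          (limit_param_set Theta0 D W thetas w \<omega>)) \<longlonglongrightarrow> 0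
         \<and> limit_param_set Theta0 D W thetas w \<omega> \<subseteq> cball thetas (rho * sqrt (real N_u / beta))"
proof -
  interpret P: prob_space M by (rule prob)
  obtain \<omega>0 where \<omega>0: "\<omega>0 \<in> space M" using P.not_empty by blast
  have Om_ne: "Omega \<noteq> {}" using w_in \<omega>0 by blast
  define supp :: "real^'n \<Rightarrow> real^'n" where
    "supp v = (SOME s. s \<in> frontier Omega \<and> (\<forall>a\<in>Omega. v \<bullet> a \<le> v \<bullet> s))" for v
  have supp: "supp v \<in> frontier Omega \<and> (\<forall>a\<in>Omega. v \<bullet> a \<le> v \<bullet> supp v)" for v
    unfolding supp_def by (rule someI_ex) (rule supp_exists[OF Omega_compact Om_ne])
  have Npos: "N_u > 0"
  proof -
    have "0 < real CARD('p) / real CARD('n)" by simp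
    then have "0 < \<lceil>real CARD('p) / real CARD('n)\<rceil>" by simp
    then have "1 \<le> real N_u" using N_u_ge by linarith
    then show ?thesis by simp
  qed
  obtain C :: "(real^'p) set" where C: "countable C" "\<And>X. open X \<Longrightarrow> X \<noteq> {} \<Longrightarrow> \<exists>d\<in>C. d \<in> X"
    using countable_dense_setE by blast
  define s where "s c j = supp (D j *v (thetas - c))" for c j
  define ev where "ev c k \<omega> = (\<exists>m. \<forall>i<N_u. w (m*N_u+i) \<omega> \<in> ball (s c (m*N_u+i)) (1 / real (Suc k)))"
    for c k \<omega>
  have AE1: "AE \<omega> in M. \<forall>ck\<in>C \<times> (UNIV::nat set). ev (fst ck) (snd ck) \<omega>"
  proof (subst AE_ball_countable)
    show "countable (C \<times> (UNIV::nat set))" using C(1) by simp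
    show "\<forall>ck\<in>C \<times> (UNIV::nat set). AE \<omega> in M. ev (fst ck) (snd ck) \<omega>"
    proof
      fix ck assume "ck \<in> C \<times> (UNIV::nat set)"
      obtain c k where ck: "ck = (c,k)" by (cases ck)
      have e: "0 < 1 / real (Suc k)" by simp
      have pb: "p_w (1 / real (Suc k)) \<le> P.prob (w j -` ball (s c j) (1 / real (Suc k)) \<inter> space M)" for j
      proof -
        have "w j -` ball (s c j) (1 / real (Suc k)) \<inter> space M
             = {\<omega>\<in>space M. norm (w j \<omega> - s c j) < 1 / real (Suc k)}"
          by (auto simp: dist_norm norm_minus_commute)
        moreover have "s c j \<in> frontier Omega" using supp by (simp add: s_def)
        ultimately show ?thesis using p_w_bound e by simp
      qed
      have "AE \<omega> in M. \<exists>m. \<forall>i<N_u. w (m*N_u+i) \<omega> \<in> (\<lambda>j. ball (s c j) (1 / real (Suc k))) (m*N_u+i)"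
        by (rule P.blocks_AE[where X=w and Bs="\<lambda>j. ball (s c j) (1 / real (Suc k))"
              and q="p_w (1 / real (Suc k))" and N=N_u, OF indep _ pb _ Npos])
           (use p_w_range e in auto)
      then show "AE \<omega> in M. ev (fst ck) (snd ck) \<omega>" by (simp add: ck ev_def)
    qed
  qed
  show ?thesis
  proof (rule AE_mp[OF AE1], rule AE_I2, rule impI)
    fix \<omega> assume \<omega>: "\<omega> \<in> space M" and all: "\<forall>ck\<in>C \<times> (UNIV::nat set). ev (fst ck) (snd ck) \<omega>"
    define T where "T t = min_param_set Theta0 D W thetas w t \<omega>" for t
    define Tinf where "Tinf = limit_param_set Theta0 D W thetas w \<omega>"
    have Tinf_eq: "Tinf = (\<Inter>t. T t)" by (simp add: Tinf_def T_def limit_param_set_def)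
    have memj: "D j *v (thetas - \<theta>) + w j \<omega> \<in> W" if "\<theta> \<in> Tinf" for \<theta> j
    proof -
      have "\<theta> \<in> T (Suc j)" using that Tinf_eq by auto
      then have "\<theta> \<in> unfalsified_set D W thetas w (Suc j) \<omega>" by (auto simp: T_def min_param_set_def)
      then show ?thesis by (simp add: unfalsified_set_def)
    qed
    have th_T: "thetas \<in> T t" for t
      using thetas_in w_in \<omega> Omega_sub by (auto simp: T_def min_param_set_def unfalsified_set_def)
    have th_inf: "thetas \<in> Tinf" using th_T Tinf_eq by auto
    have Tmono: "T n \<subseteq> T m" if "m \<le> n" for m n using that by (auto simp: T_def min_param_set_def)
    have W_closed: "closed W" using W_compact compact_imp_closed by blast
    have Ucl: "closed (unfalsified_set D W thetas w j \<omega>)" for j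
    proof -
      have "unfalsified_set D W thetas w j \<omega> = (\<lambda>\<theta>. D (j-1) *v (thetas - \<theta>) + w (j-1) \<omega>) -` W"
        by (auto simp: unfalsified_set_def)
      also have "closed \<dots>"
        by (intro closed_vimage W_closed continuous_intros continuous_on_compose2[OF matrix_vector_mult_linear_continuous_on]) auto
      finally show ?thesis .
    qed
    have Tcomp: "compact (T t)" for t unfolding T_def min_param_set_def
      using Theta0_compact Ucl by (intro compact_Int_closed closed_INT) auto
    have ballB: "Tinf \<subseteq> cball thetas (rho * sqrt (real N_u / beta))"
    proof
      fix \<theta> assume \<theta>: "\<theta> \<in> Tinf"
      define a where "a = sqrt (real N_u / beta)"
      have a0: "a \<ge> 0" using beta_pos by (simp add: a_def)
      have claim: "norm (thetas - \<theta>) \<le> a * (rho + 1 / real (Suc k) + tau * r) + r" if r: "r > 0" for r k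
      proof -
        obtain c where c: "c \<in> C" "c \<in> ball \<theta> r" using C(2)[of "ball \<theta> r"] r by auto
        obtain m where m: "\<forall>i<N_u. w (m*N_u+i) \<omega> \<in> ball (s c (m*N_u+i)) (1 / real (Suc k))"
          using all c(1) by (force simp: ev_def)
        define L where "L = rho + 1 / real (Suc k) + tau * r"
        have L0: "L \<ge> 0" using rho_pos tau_pos r by (simp add: L_def)
        define x where "x = thetas - c"
        have bnd: "norm (D j *v x) \<le> L" if j: "j \<in> {m*N_u..m*N_u + N_u - 1}" for j
        proof -
          have "j - m*N_u < N_u" "m*N_u + (j - m*N_u) = j" using j Npos by auto
          then have wj: "w j \<omega> \<in> ball (s c j) (1 / real (Suc k))" using m by metis
          let ?v = "D j *v (thetas - \<theta>)" and ?vc = "D j *v x"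
          have "?v + w j \<omega> \<in> W" by (rule memj[OF \<theta>])
          then obtain a0 b where ab: "?v + w j \<omega> = a0 + b" "a0 \<in> Omega" "b \<in> cball 0 rho"
            using W_sub by blast
          have sp: "norm ?vc \<le> norm (s c j + ?vc - a0)"
            using supp_ineq[OF conjunct2[OF supp] ab(2)] by (simp add: s_def x_def)
          have eq: "s c j + ?vc - a0 = b + (s c j - w j \<omega>) + (?vc - ?v)"
            using ab(1) by (simp add: algebra_simps)
          have n1: "norm b \<le> rho" using ab(3) by simp
          have n2: "norm (s c j - w j \<omega>) < 1 / real (Suc k)" using wj by (simp add: dist_norm)
          have dv: "?vc - ?v = D j *v (\<theta> - c)"
            by (simp add: x_def matrix_vector_mult_diff_distrib[symmetric])
          have n3: "norm (D j *v (\<theta> - c)) \<le> tau * r"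
          proof -
            have "norm (D j *v (\<theta> - c)) \<le> onorm (\<lambda>x. D j *v x) * norm (\<theta> - c)" by (rule onorm) simp
            also have "\<dots> \<le> tau * r" using D_bound c(2) tau_pos
              by (intro mult_mono) (auto simp: dist_norm onorm_pos_le less_imp_le)
            finally show ?thesis .
          qed
          have "norm (s c j + ?vc - a0) \<le> norm b + norm (s c j - w j \<omega>) + norm (?vc - ?v)"
            unfolding eq using norm_triangle_ineq[of b "s c j - w j \<omega>"]
              norm_triangle_ineq[of "b + (s c j - w j \<omega>)" "?vc - ?v"] by linarith
          then have "norm (s c j + ?vc - a0) \<le> norm b + norm (s c j - w j \<omega>) + norm (D j *v (\<theta> - c))"
            by (simp only: dv)
          then show ?thesis using sp n1 n2 n3 unfolding L_def by linarith
        qed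
        let ?S = "{m*N_u..m*N_u + N_u - 1}"
        have cardS: "card ?S = N_u" using Npos by simp
        have "beta * (x \<bullet> x) \<le> x \<bullet> ((\<Sum>j\<in>?S. transpose (D j) ** D j) *v x)"
          using PE by blast
        also have "\<dots> = (\<Sum>j\<in>?S. norm (D j *v x) ^ 2)"
          by (rule quad_form) simp
        also have "\<dots> \<le> real (card ?S) * L ^ 2"
          using bnd by (intro sum_bounded_above power_mono) auto
        finally have "beta * norm x ^ 2 \<le> real N_u * L ^ 2"
          using cardS by (simp add: power2_norm_eq_inner)
        then have "norm x ^ 2 \<le> (real N_u / beta) * L ^ 2"
          using beta_pos by (simp add: field_simps)
        also have "\<dots> = (a * L) ^ 2"
        proof -
          have a2: "a ^ 2 = real N_u / beta" unfolding a_def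
            by (rule real_sqrt_pow2) (use beta_pos in simp)
          show ?thesis unfolding power_mult_distrib a2 ..
        qed
        finally have nx: "norm x \<le> a * L"
          by (rule power2_le_imp_le) (use a0 L0 in auto)
        have "thetas - \<theta> = x + (c - \<theta>)" by (simp add: x_def)
        then have "norm (thetas - \<theta>) \<le> norm x + norm (c - \<theta>)" by (metis norm_triangle_ineq)
        moreover have "norm (c - \<theta>) < r" using c(2) by (simp add: dist_norm norm_minus_commute)
        ultimately show ?thesis using nx unfolding L_def by linarith
      qed
      show "\<theta> \<in> cball thetas (rho * sqrt (real N_u / beta))"
      proof (rule ccontr)
        assume "\<theta> \<notin> cball thetas (rho * sqrt (real N_u / beta))"
        then have gt: "norm (thetas - \<theta>) > a * rho" by (simp add: dist_norm a_def mult.commute)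
        define g where "g = norm (thetas - \<theta>) - a * rho"
        have g0: "g > 0" using gt by (simp add: g_def)
        obtain k where k: "inverse (real (Suc k)) < g / (2 * (a + 1))"
          using reals_Archimedean[of "g / (2 * (a + 1))"] g0 a0 by auto
        define r where "r = g / (4 * (a * tau + 1))"
        have aT: "a * tau + 1 > 0" using a0 tau_pos by (simp add: add_nonneg_pos)
        have r0: "r > 0" using g0 aT by (simp add: r_def)
        have h1: "a * (1 / real (Suc k)) \<le> a * (g / (2 * (a + 1)))"
          using k a0 by (intro mult_left_mono) (auto simp: inverse_eq_divide)
        have h2: "a * (g / (2 * (a + 1))) \<le> g / 2"
          using a0 g0 by (simp add: field_simps)
        have h3: "(a * tau + 1) * r = g / 4"
        proof -
          have "(a * tau + 1) * r = ((a * tau + 1) * g) / ((a * tau + 1) * 4)"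
            unfolding r_def times_divide_eq_right by (simp only: mult.commute[of 4])
          also have "\<dots> = g / 4" by (rule nonzero_mult_divide_mult_cancel_left) (use aT in simp)
          finally show ?thesis .
        qed
        have "norm (thetas - \<theta>) \<le> a * (rho + 1 / real (Suc k) + tau * r) + r" by (rule claim[OF r0])
        also have "\<dots> = a * rho + a * (1 / real (Suc k)) + (a * tau + 1) * r" by (simp add: algebra_simps)
        finally show False using h1 h2 h3 g0 g_def by linarith
      qed
    qed
    have conv: "(\<lambda>t. hausdorff_dist (T t) Tinf) \<longlonglongrightarrow> 0"
    proof (rule LIMSEQ_I)
      fix r :: real assume r: "0 < r"
      have "\<exists>t0. \<forall>a\<in>T t0. infdist a Tinf < r/2"
      proof (rule ccontr)
        assume "\<not> ?thesis"
        then have ex: "\<forall>t. \<exists>a\<in>T t. r/2 \<le> infdist a Tinf" by (auto simp: not_less)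
        define F where "F t = T t \<inter> {a. r/2 \<le> infdist a Tinf}" for t
        have "\<Inter>(range F) \<noteq> {}"
        proof (rule compact_nest)
          show "compact (F t)" for t unfolding F_def using Tcomp
            by (intro compact_Int_closed closed_Collect_le continuous_intros continuous_on_infdist) auto
          show "F t \<noteq> {}" for t using ex by (auto simp: F_def)
          show "F n \<subseteq> F m" if "m \<le> n" for m n using Tmono[OF that] by (auto simp: F_def)
        qed
        then obtain a where "\<forall>t. a \<in> F t" by auto
        then have "a \<in> Tinf" "r/2 \<le> infdist a Tinf" by (auto simp: F_def Tinf_eq)
        then show False using r by simp
      qed
      then obtain t0 where t0: "\<forall>a\<in>T t0. infdist a Tinf < r/2" by blast
      show "\<exists>no. \<forall>n\<ge>no. norm (hausdorff_dist (T n) Tinf - 0) < r"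
      proof (intro exI allI impI)
        fix n assume n: "t0 \<le> n"
        have ne: "T n \<noteq> {}" "Tinf \<noteq> {}" using th_T th_inf by auto
        have S1: "(SUP a\<in>T n. infdist a Tinf) \<le> r/2"
          using t0 Tmono[OF n] ne by (intro cSUP_least) (auto intro: less_imp_le)
        have S2: "(SUP b\<in>Tinf. infdist b (T n)) = 0"
        proof -
          have "(SUP b\<in>Tinf. infdist b (T n)) = (SUP b\<in>Tinf. (0::real))"
            using Tinf_eq by (intro SUP_cong) auto
          then show ?thesis using ne by simp
        qed
        show "norm (hausdorff_dist (T n) Tinf - 0) < r"
          using S1 S2 r by (simp add: hausdorff_dist_def)
      qed
    qed
    show "(\<lambda>t. hausdorff_dist (min_param_set Theta0 D W thetas w t \<omega>)
                          (limit_param_set Theta0 D W thetas w \<omega>)) \<longlonglongrightarrow> 0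
         \<and> limit_param_set Theta0 D W thetas w \<omega> \<subseteq> cball thetas (rho * sqrt (real N_u / beta))"
      using conv ballB by (simp add: T_def Tinf_def)
  qed
qed

end
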